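(* Let $\mathbb{C}=(\mathbf{C},0,\mathbf{D},\mathcal{R})$ be a reactive system with redex IPOs and let $O$ be a set of contextual barbs. If the set of all labels (all arrows of $\mathbf{C}$) is $O$-capturing and each label is stable under barbed saturated bisimilarity $\sim^{BS}$, then IPO-bisimilarity $\sim^{I}$ coincides with $\sim^{BS}$.
   Context: A reactive system consists of a category $\mathbf{C}$, a distinguished object $0$, a composition-reflecting subcategory $\mathbf{D}$ of reactive contexts, and a set $\mathcal{R}\subseteq\bigcup_I\mathbf{C}(0,I)\times\mathbf{C}(0,I)$ of reduction rules. Terms are arrows with domain $0$; $C[P]$ denotes $C[-]\circ P$. Reduction: $P\rightsquigarrow Q$ iff $P=d\circ l$, $Q=d\circ r$ for some $\langle l,r\rangle\in\mathcal{R}$, $d\in\mathbf{D}$. For a commuting square $c_1\circ a_1=c_2\circ a_2$ with $a_1:K\to I_2$, $a_2:K\to I_3$, $c_1:I_2\to I_4$, $c_2:I_3\to I_4$, a candidate is $\langle I_5,e,f,g\rangle$ with $e\circ a_1=f\circ a_2$, $g\circ e=c_1$, $g\circ f=c_2$; an RPO is a candidate through which every other candidate $\langle I_6,e',f',g'\rangle$ factors via a unique $h:I_5\to I_6$ ($h\circ e=e'$, $h\circ f=f'$, $g'\circ h=g$); the square is an IPO if $\langle I_4,c_1,c_2,\mathrm{id}\rangle$ is an RPO. A redex square is a commuting square $C[-]\circ P=d\circ l$ with $\langle l,r\rangle\in\mathcal{R}$, $d\in\mathbf{D}$; the system has redex IPOs if every redex square has a candidate $\langle I_5,e,f,g\rangle$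 for which the square $e\circ P=f\circ l$ is an IPO. IPO transitions: $P\xrightarrow{C[-]}_I d\circ r$ if $d\in\mathbf{D}$, $\langle l,r\rangle\in\mathcal{R}$ and $C[-]\circ P=d\circ l$ is an IPO. IPO-bisimilarity $\sim^I$ is ordinary strong bisimilarity on this labelled transition system. Barbs are predicates on terms; $P\downarrow_o$ means $P$ satisfies $o\in O$. Barbed saturated bisimilarity $\sim^{BS}$ is the largest symmetric relation $\mathcal{R}'$ such that if $P\,\mathcal{R}'\,Q$ then for all arrows $C[-]$ composable with $P$: $C[P]\downarrow_o$ implies $C[Q]\downarrow_o$, and $C[P]\rightsquigarrow P'$ implies $C[Q]\rightsquigarrow Q'$ with $P'\,\mathcal{R}'\,Q'$. A barb $o$ is contextual if whenever ($P\downarrow_o$ implies $Q\downarrow_o$) then for all $C[-]$, $C[P]\downarrow_o$ implies $C[Q]\downarrow_o$. A set of labels $L$ is $O$-capturing if for each $o\in O$ there is $C[-]\in L$ such that for every term $P$, $P\downarrow_o$ iff $P\xrightarrow{C[-]}_I P'$ for some $P'$. A label $C[-]$ is stable under a relation $\mathcal{R}'$ if whenever $P\,\mathcal{R}'\,Q$ and $P\xrightarrow{C[-]}_I P'$ there is $Q'$ with $Q\xrightarrow{C[-]}_I Q'$ and $P'\,\mathcal{R}'\,Q'$. *)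

theory Defs
  imports Main
begin

text \<open>A category whose arrows are all elements of type 'a and objects all elements of 'o.
  comp g f denotes g composed after f (only meaningful when dom g = cod f).\<close>

record ('o, 'a) cat =
  dom :: "'a \<Rightarrow> 'o"
  cod :: "'a \<Rightarrow> 'o"
  comp :: "'a \<Rightarrow> 'a \<Rightarrow> 'a"
  idt :: "'o \<Rightarrow> 'a"

definition category :: "('o, 'a) cat \<Rightarrow> bool" where
  "category K \<longleftrightarrow>
     (\<forall>X. dom K (idt K X) = X \<and> cod K (idt K X) = X) \<and>
     (\<forall>f g. dom K g = cod K f \<longrightarrow>
        dom K (comp K g f) = dom K f \<and> cod K (comp K g f) = cod K g) \<and>
     (\<forall>f. comp K f (idt K (dom K f)) = f \<and> comp K (idt K (cod K f)) f = f) \<and>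
     (\<forall>f g h. dom K g = cod K f \<longrightarrow> dom K h = cod K g \<longrightarrow>
        comp K h (comp K g f) = comp K (comp K h g) f)"

text \<open>Reactive system (C, 0, D, R): D a composition-reflecting subcategory,
  R a set of rules (l, r) with l, r : 0 \<rightarrow> I.\<close>

definition reactive_system :: "('o, 'a) cat \<Rightarrow> 'o \<Rightarrow> 'a set \<Rightarrow> ('a \<times> 'a) set \<Rightarrow> bool" where
  "reactive_system K z D R \<longleftrightarrow>
     category K \<and>
     (\<forall>d\<in>D. idt K (dom K d) \<in> D \<and> idt K (cod K d) \<in> D) \<and>
     (\<forall>d\<in>D. \<forall>d'\<in>D. dom K d = cod K d' \<longrightarrow> comp K d d' \<in> D) \<and>
     (\<forall>d d'. dom K d = cod K d' \<longrightarrow> comp K d d' \<in> D \<longrightarrow> d \<in> D \<and> d' \<in> D) \<and>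
     (\<forall>(l, r)\<in>R. dom K l = z \<and> dom K r = z \<and> cod K l = cod K r)"

definition "term" :: "('o, 'a) cat \<Rightarrow> 'o \<Rightarrow> 'a \<Rightarrow> bool" where
  "term K z P \<longleftrightarrow> dom K P = z"

definition reduces :: "('o, 'a) cat \<Rightarrow> 'a set \<Rightarrow> ('a \<times> 'a) set \<Rightarrow> 'a \<Rightarrow> 'a \<Rightarrow> bool" where
  "reduces K D R P Q \<longleftrightarrow>
     (\<exists>l r d. (l, r) \<in> R \<and> d \<in> D \<and> dom K d = cod K l \<and>
              P = comp K d l \<and> Q = comp K d r)"

definition comm_square :: "('o, 'a) cat \<Rightarrow> 'a \<Rightarrow> 'a \<Rightarrow> 'a \<Rightarrow> 'a \<Rightarrow> bool" where
  "comm_square K a1 a2 c1 c2 \<longleftrightarrow>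
     dom K a1 = dom K a2 \<and> dom K c1 = cod K a1 \<and> dom K c2 = cod K a2 \<and>
     cod K c1 = cod K c2 \<and> comp K c1 a1 = comp K c2 a2"

definition candidate :: "('o, 'a) cat \<Rightarrow> 'a \<Rightarrow> 'a \<Rightarrow> 'a \<Rightarrow> 'a \<Rightarrow> 'a \<Rightarrow> 'a \<Rightarrow> 'a \<Rightarrow> bool" where
  "candidate K a1 a2 c1 c2 e f g \<longleftrightarrow>
     dom K e = cod K a1 \<and> dom K f = cod K a2 \<and>
     cod K e = cod K f \<and> dom K g = cod K e \<and> cod K g = cod K c1 \<and>
     comp K e a1 = comp K f a2 \<and> comp K g e = c1 \<and> comp K g f = c2"

definition RPO :: "('o, 'a) cat \<Rightarrow> 'a \<Rightarrow> 'a \<Rightarrow> 'a \<Rightarrow> 'a \<Rightarrow> 'a \<Rightarrow> 'a \<Rightarrow> 'a \<Rightarrow> bool" where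
  "RPO K a1 a2 c1 c2 e f g \<longleftrightarrow>
     candidate K a1 a2 c1 c2 e f g \<and>
     (\<forall>e' f' g'. candidate K a1 a2 c1 c2 e' f' g' \<longrightarrow>
        (\<exists>!h. dom K h = cod K e \<and> cod K h = cod K e' \<and>
              comp K h e = e' \<and> comp K h f = f' \<and> comp K g' h = g))"

definition IPO :: "('o, 'a) cat \<Rightarrow> 'a \<Rightarrow> 'a \<Rightarrow> 'a \<Rightarrow> 'a \<Rightarrow> bool" where
  "IPO K a1 a2 c1 c2 \<longleftrightarrow>
     comm_square K a1 a2 c1 c2 \<and> RPO K a1 a2 c1 c2 c1 c2 (idt K (cod K c1))"

definition has_redex_IPOs :: "('o, 'a) cat \<Rightarrow> 'o \<Rightarrow> 'a set \<Rightarrow> ('a \<times> 'a) set \<Rightarrow> bool" where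
  "has_redex_IPOs K z D R \<longleftrightarrow>
     (\<forall>C P d l r. term K z P \<and> (l, r) \<in> R \<and> d \<in> D \<and> comm_square K P l C d \<longrightarrow>
        (\<exists>e f g. candidate K P l C d e f g \<and> IPO K P l e f))"

definition ipo_trans :: "('o, 'a) cat \<Rightarrow> 'o \<Rightarrow> 'a set \<Rightarrow> ('a \<times> 'a) set \<Rightarrow> 'a \<Rightarrow> 'a \<Rightarrow> 'a \<Rightarrow> bool" where
  "ipo_trans K z D R P C P' \<longleftrightarrow>
     term K z P \<and>
     (\<exists>d l r. d \<in> D \<and> (l, r) \<in> R \<and> IPO K P l C d \<and> P' = comp K d r)"

definition term_rel :: "('o, 'a) cat \<Rightarrow> 'o \<Rightarrow> ('a \<times> 'a) set \<Rightarrow> bool" where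
  "term_rel K z Rel \<longleftrightarrow>
     (\<forall>(P, Q)\<in>Rel. term K z P \<and> term K z Q \<and> cod K P = cod K Q)"

definition ipo_bisimulation :: "('o, 'a) cat \<Rightarrow> 'o \<Rightarrow> 'a set \<Rightarrow> ('a \<times> 'a) set \<Rightarrow> ('a \<times> 'a) set \<Rightarrow> bool" where
  "ipo_bisimulation K z D R Rel \<longleftrightarrow>
     term_rel K z Rel \<and>
     (\<forall>(P, Q)\<in>Rel. \<forall>C P'. ipo_trans K z D R P C P' \<longrightarrow>
         (\<exists>Q'. ipo_trans K z D R Q C Q' \<and> (P', Q') \<in> Rel)) \<and>
     (\<forall>(P, Q)\<in>Rel. \<forall>C Q'. ipo_trans K z D R Q C Q' \<longrightarrow>
         (\<exists>P'. ipo_trans K z D R P C P' \<and> (P', Q') \<in> Rel))"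

definition ipo_bisimilar :: "('o, 'a) cat \<Rightarrow> 'o \<Rightarrow> 'a set \<Rightarrow> ('a \<times> 'a) set \<Rightarrow> 'a \<Rightarrow> 'a \<Rightarrow> bool" where
  "ipo_bisimilar K z D R P Q \<longleftrightarrow> (\<exists>Rel. ipo_bisimulation K z D R Rel \<and> (P, Q) \<in> Rel)"

definition bs_bisimulation :: "('o, 'a) cat \<Rightarrow> 'o \<Rightarrow> 'a set \<Rightarrow> ('a \<times> 'a) set \<Rightarrow>
    'b set \<Rightarrow> ('a \<Rightarrow> 'b \<Rightarrow> bool) \<Rightarrow> ('a \<times> 'a) set \<Rightarrow> bool" where
  "bs_bisimulation K z D R Obs barb Rel \<longleftrightarrow>
     term_rel K z Rel \<and> sym Rel \<and>
     (\<forall>(P, Q)\<in>Rel. \<forall>C. dom K C = cod K P \<longrightarrow>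
        (\<forall>o'\<in>Obs. barb (comp K C P) o' \<longrightarrow> barb (comp K C Q) o') \<and>
        (\<forall>P'. reduces K D R (comp K C P) P' \<longrightarrow>
           (\<exists>Q'. reduces K D R (comp K C Q) Q' \<and> (P', Q') \<in> Rel)))"

definition bs_bisimilar :: "('o, 'a) cat \<Rightarrow> 'o \<Rightarrow> 'a set \<Rightarrow> ('a \<times> 'a) set \<Rightarrow>
    'b set \<Rightarrow> ('a \<Rightarrow> 'b \<Rightarrow> bool) \<Rightarrow> 'a \<Rightarrow> 'a \<Rightarrow> bool" where
  "bs_bisimilar K z D R Obs barb P Q \<longleftrightarrow>
     (\<exists>Rel. bs_bisimulation K z D R Obs barb Rel \<and> (P, Q) \<in> Rel)"

definition contextual_barb :: "('o, 'a) cat \<Rightarrow> 'o \<Rightarrow> ('a \<Rightarrow> 'b \<Rightarrow> bool) \<Rightarrow> 'b \<Rightarrow> bool" where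
  "contextual_barb K z barb o' \<longleftrightarrow>
     (\<forall>P Q. term K z P \<and> term K z Q \<and> cod K P = cod K Q \<longrightarrow>
        (barb P o' \<longrightarrow> barb Q o') \<longrightarrow>
        (\<forall>C. dom K C = cod K P \<longrightarrow> barb (comp K C P) o' \<longrightarrow> barb (comp K C Q) o'))"

definition O_capturing :: "('o, 'a) cat \<Rightarrow> 'o \<Rightarrow> 'a set \<Rightarrow> ('a \<times> 'a) set \<Rightarrow>
    'b set \<Rightarrow> ('a \<Rightarrow> 'b \<Rightarrow> bool) \<Rightarrow> 'a set \<Rightarrow> bool" where
  "O_capturing K z D R Obs barb L \<longleftrightarrow>
     (\<forall>o'\<in>Obs. \<exists>C\<in>L. \<forall>P. term K z P \<longrightarrow>
        (barb P o' \<longleftrightarrow> (\<exists>P'. ipo_trans K z D R P C P')))"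

definition stable_label :: "('o, 'a) cat \<Rightarrow> 'o \<Rightarrow> 'a set \<Rightarrow> ('a \<times> 'a) set \<Rightarrow>
    ('a \<Rightarrow> 'a \<Rightarrow> bool) \<Rightarrow> 'a \<Rightarrow> bool" where
  "stable_label K z D R Rel C \<longleftrightarrow>
     (\<forall>P Q P'. Rel P Q \<and> ipo_trans K z D R P C P' \<longrightarrow>
        (\<exists>Q'. ipo_trans K z D R Q C Q' \<and> Rel P' Q'))"

end

theory Submission
  imports Defs
begin

lemma cat_id: "category K \<Longrightarrow> dom K (idt K X) = X \<and> cod K (idt K X) = X"
  unfolding category_def by blast
lemma cat_comp: "category K \<Longrightarrow> dom K g = cod K f \<Longrightarrow>
   dom K (comp K g f) = dom K f \<and> cod K (comp K g f) = cod K g"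
  unfolding category_def by blast
lemma cat_idl: "category K \<Longrightarrow> comp K (idt K (cod K f)) f = f"
  unfolding category_def by blast
lemma cat_assoc: "category K \<Longrightarrow> dom K g = cod K f \<Longrightarrow> dom K h = cod K g \<Longrightarrow>
   comp K h (comp K g f) = comp K (comp K h g) f"
  unfolding category_def by blast

lemma bs_sym: "bs_bisimilar K z D R Obs barb P Q \<Longrightarrow> bs_bisimilar K z D R Obs barb Q P"
  unfolding bs_bisimilar_def bs_bisimulation_def by (meson symD)

lemma bs_imp_ipo:
  assumes st: "\<forall>C. stable_label K z D R (bs_bisimilar K z D R Obs barb) C"
    and "bs_bisimilar K z D R Obs barb P Q"
  shows "ipo_bisimilar K z D R P Q"
proof -
  let ?S = "{(P,Q). bs_bisimilar K z D R Obs barb P Q}"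
  have "ipo_bisimulation K z D R ?S"
    unfolding ipo_bisimulation_def
  proof (intro conjI)
    show "term_rel K z ?S"
      unfolding term_rel_def bs_bisimilar_def bs_bisimulation_def term_rel_def by blast
    show "\<forall>(P, Q)\<in>?S. \<forall>C P'. ipo_trans K z D R P C P' \<longrightarrow>
         (\<exists>Q'. ipo_trans K z D R Q C Q' \<and> (P', Q') \<in> ?S)"
      using st unfolding stable_label_def by blast
    show "\<forall>(P, Q)\<in>?S. \<forall>C Q'. ipo_trans K z D R Q C Q' \<longrightarrow>
         (\<exists>P'. ipo_trans K z D R P C P' \<and> (P', Q') \<in> ?S)"
    proof (clarsimp)
      fix P Q C Q'
      assume "bs_bisimilar K z D R Obs barb P Q" "ipo_trans K z D R Q C Q'"
      from this(1) have "bs_bisimilar K z D R Obs barb Q P" by (rule bs_sym)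
      then obtain P' where "ipo_trans K z D R P C P'" "bs_bisimilar K z D R Obs barb Q' P'"
        using st \<open>ipo_trans K z D R Q C Q'\<close> unfolding stable_label_def by blast
      moreover from this(2) have "bs_bisimilar K z D R Obs barb P' Q'" by (rule bs_sym)
      ultimately show "\<exists>P'. ipo_trans K z D R P C P' \<and> bs_bisimilar K z D R Obs barb P' Q'"
        by blast
    qed
  qed
  then show ?thesis using assms(2) unfolding ipo_bisimilar_def by blast
qed

lemma ipo_sym: "ipo_bisimilar K z D R P Q \<Longrightarrow> ipo_bisimilar K z D R Q P"
proof -
  assume "ipo_bisimilar K z D R P Q"
  then obtain S where S: "ipo_bisimulation K z D R S" "(P,Q) \<in> S"
    unfolding ipo_bisimilar_def by blast
  have "ipo_bisimulation K z D R (converse S)"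
    using S(1) unfolding ipo_bisimulation_def term_rel_def by fastforce
  then show ?thesis using S(2) unfolding ipo_bisimilar_def by blast
qed

lemma ipo_term: "ipo_bisimilar K z D R P Q \<Longrightarrow> dom K P = z \<and> dom K Q = z \<and> cod K P = cod K Q"
  unfolding ipo_bisimilar_def ipo_bisimulation_def term_rel_def term_def by blast

lemma ipo_step: "ipo_bisimilar K z D R P Q \<Longrightarrow> ipo_trans K z D R P C P' \<Longrightarrow>
   \<exists>Q'. ipo_trans K z D R Q C Q' \<and> ipo_bisimilar K z D R P' Q'"
  unfolding ipo_bisimilar_def ipo_bisimulation_def by blast

lemma ipo_imp_bs:
  assumes rs: "reactive_system K z D R"
    and rI: "has_redex_IPOs K z D R"
    and ctx: "\<forall>o'\<in>Obs. contextual_barb K z barb o'"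
    and cap: "O_capturing K z D R Obs barb UNIV"
    and PQ: "ipo_bisimilar K z D R P Q"
  shows "bs_bisimilar K z D R Obs barb P Q"
proof -
  have cat: "category K" using rs unfolding reactive_system_def by blast
  have Drefl: "\<And>d d'. dom K d = cod K d' \<Longrightarrow> comp K d d' \<in> D \<Longrightarrow> d \<in> D \<and> d' \<in> D"
    using rs unfolding reactive_system_def by blast
  have Dcomp: "\<And>d d'. d \<in> D \<Longrightarrow> d' \<in> D \<Longrightarrow> dom K d = cod K d' \<Longrightarrow> comp K d d' \<in> D"
    using rs unfolding reactive_system_def by blast
  have Rdom: "\<And>l r. (l,r) \<in> R \<Longrightarrow> dom K l = z \<and> dom K r = z \<and> cod K l = cod K r"
    using rs unfolding reactive_system_def by blast
  define S where "S = {(comp K C P, comp K C Q) | C P Q. ipo_bisimilar K z D R P Q \<and> dom K C = cod K P}"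
  have "bs_bisimulation K z D R Obs barb S"
    unfolding bs_bisimulation_def
  proof (intro conjI)
    show "term_rel K z S"
      unfolding term_rel_def S_def term_def
      using ipo_term cat_comp[OF cat] by fastforce
    show "sym S"
      unfolding sym_def S_def using ipo_sym ipo_term by fastforce
    show "\<forall>(X, Y)\<in>S. \<forall>C'. dom K C' = cod K X \<longrightarrow>
        (\<forall>o'\<in>Obs. barb (comp K C' X) o' \<longrightarrow> barb (comp K C' Y) o') \<and>
        (\<forall>X'. reduces K D R (comp K C' X) X' \<longrightarrow>
           (\<exists>Y'. reduces K D R (comp K C' Y) Y' \<and> (X', Y') \<in> S))"
    proof (clarify)
      fix X Y C'
      assume "(X,Y) \<in> S" and dC': "dom K C' = cod K X"
      then obtain C P Q where X: "X = comp K C P" and Y: "Y = comp K C Q"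
        and PQ: "ipo_bisimilar K z D R P Q" and dC: "dom K C = cod K P"
        unfolding S_def by blast
      have tP: "dom K P = z" and tQ: "dom K Q = z" and cPQ: "cod K P = cod K Q"
        using ipo_term[OF PQ] by auto
      define C'' where "C'' = comp K C' C"
      have dC'2: "dom K C' = cod K C" using dC' X cat_comp[OF cat dC] by simp
      have dC'': "dom K C'' = cod K P" "cod K C'' = cod K C'"
        using cat_comp[OF cat dC'2] dC unfolding C''_def by auto
      have eX: "comp K C' X = comp K C'' P"
        using X cat_assoc[OF cat dC dC'2] unfolding C''_def by simp
      have eY: "comp K C' Y = comp K C'' Q"
        using Y cat_assoc[OF cat _ dC'2, of Q] dC cPQ unfolding C''_def by simp
      show "(\<forall>o'\<in>Obs. barb (comp K C' X) o' \<longrightarrow> barb (comp K C' Y) o') \<and>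
        (\<forall>X'. reduces K D R (comp K C' X) X' \<longrightarrow>
           (\<exists>Y'. reduces K D R (comp K C' Y) Y' \<and> (X', Y') \<in> S))"
      proof (intro conjI ballI allI impI)
        fix o' assume o': "o' \<in> Obs" and b: "barb (comp K C' X) o'"
        obtain Co where Co: "\<forall>P. term K z P \<longrightarrow> (barb P o' \<longleftrightarrow> (\<exists>P'. ipo_trans K z D R P Co P'))"
          using cap o' unfolding O_capturing_def by blast
        have "barb P o' \<longrightarrow> barb Q o'"
        proof
          assume "barb P o'"
          then obtain P' where "ipo_trans K z D R P Co P'" using Co tP term_def by metis
          then obtain Q' where "ipo_trans K z D R Q Co Q'" using ipo_step[OF PQ] by blast
          then show "barb Q o'" using Co tQ term_def by metis
        qed
        then have "barb (comp K C'' P) o' \<longrightarrow> barb (comp K C'' Q) o'"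
          using ctx o' tP tQ cPQ dC'' unfolding contextual_barb_def term_def by blast
        then show "barb (comp K C' Y) o'" using b eX eY by simp
      next
        fix X' assume "reduces K D R (comp K C' X) X'"
        then obtain l r d where lr: "(l,r) \<in> R" and d: "d \<in> D" and dd: "dom K d = cod K l"
          and eq: "comp K C'' P = comp K d l" and X': "X' = comp K d r"
          unfolding reduces_def eX by blast
        have sq: "comm_square K P l C'' d"
          unfolding comm_square_def using Rdom[OF lr] tP dC'' dd eq
            cat_comp[OF cat dd] cat_comp[OF cat dC''(1)] by metis
        obtain e f g where cand: "candidate K P l C'' d e f g" and ipo: "IPO K P l e f"
          using rI lr d sq tP unfolding has_redex_IPOs_def term_def by blast
        have dg: "dom K g = cod K f" and ge: "comp K g e = C''" and gf: "comp K g f = d"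
          and de: "dom K e = cod K P" and df: "dom K f = cod K l" and cef: "cod K e = cod K f"
          using cand unfolding candidate_def by auto
        have gD: "g \<in> D" and fD: "f \<in> D" using Drefl[OF dg] gf d by auto
        have "ipo_trans K z D R P e (comp K f r)"
          unfolding ipo_trans_def term_def using tP fD lr ipo by blast
        then obtain Q' where tQ': "ipo_trans K z D R Q e Q'" and PQ': "ipo_bisimilar K z D R (comp K f r) Q'"
          using ipo_step[OF PQ] by blast
        then obtain d' l' r' where d': "d' \<in> D" and lr': "(l',r') \<in> R" and ipo': "IPO K Q l' e d'"
          and Q': "Q' = comp K d' r'" unfolding ipo_trans_def by blast
        have sq': "comp K e Q = comp K d' l'" and dd': "dom K d' = cod K l'" and ced': "cod K e = cod K d'"
          and deQ: "dom K e = cod K Q"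
          using ipo' unfolding IPO_def comm_square_def by auto
        have dgd': "dom K g = cod K d'" using dg cef ced' by simp
        have gd'D: "comp K g d' \<in> D" using Dcomp[OF gD d' dgd'] .
        have "comp K C'' Q = comp K g (comp K e Q)"
          using cat_assoc[OF cat deQ, of g] dg cef ge by simp
        also have "\<dots> = comp K (comp K g d') l'"
          using sq' cat_assoc[OF cat dd' dgd'] by simp
        finally have red: "reduces K D R (comp K C' Y) (comp K (comp K g d') r')"
          unfolding reduces_def eY
          apply (rule_tac x=l' in exI, rule_tac x=r' in exI, rule_tac x="comp K g d'" in exI)
          using gd'D lr' cat_comp[OF cat dgd'] dd' by simp
        have dr': "dom K d' = cod K r'" using dd' Rdom[OF lr'] by simp
        have dr: "dom K f = cod K r" using df Rdom[OF lr] by simp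
        have e1: "X' = comp K g (comp K f r)"
          using X' gf cat_assoc[OF cat dr dg] by simp
        have e2: "comp K (comp K g d') r' = comp K g Q'"
          using Q' cat_assoc[OF cat dr' dgd'] by simp
        have "(X', comp K g Q') \<in> S"
          unfolding S_def e1
          apply (rule CollectI, rule exI[where x=g], rule exI[where x="comp K f r"], rule exI[where x=Q'])
          using PQ' dg cat_comp[OF cat dr] by simp
        then show "\<exists>Y'. reduces K D R (comp K C' Y) Y' \<and> (X', Y') \<in> S"
          using red e2 by auto
      qed
    qed
  qed
  moreover have "(P,Q) \<in> S"
  proof -
    have "comp K (idt K (cod K P)) P = P" "comp K (idt K (cod K P)) Q = Q"
      using cat_idl[OF cat] ipo_term[OF PQ] by metis+
    moreover have "dom K (idt K (cod K P)) = cod K P" using cat_id[OF cat] by blast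
    ultimately show ?thesis unfolding S_def
      apply (rule_tac CollectI, rule_tac x="idt K (cod K P)" in exI, rule_tac x=P in exI, rule_tac x=Q in exI)
      using PQ by simp
  qed
  ultimately show ?thesis unfolding bs_bisimilar_def by blast
qed

theorem mainTheorem3:
  fixes K :: "('o, 'a) cat" and z :: 'o and D :: "'a set" and R :: "('a \<times> 'a) set"
    and Obs :: "'b set" and barb :: "'a \<Rightarrow> 'b \<Rightarrow> bool"
  assumes "reactive_system K z D R"
    and "has_redex_IPOs K z D R"
    and "\<forall>o'\<in>Obs. contextual_barb K z barb o'"
    and "O_capturing K z D R Obs barb UNIV"
    and "\<forall>C. stable_label K z D R (bs_bisimilar K z D R Obs barb) C"
  shows "\<forall>P Q. ipo_bisimilar K z D R P Q \<longleftrightarrow> bs_bisimilar K z D R Obs barb P Q"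
  using ipo_imp_bs[OF assms(1-4)] bs_imp_ipo[OF assms(5)] by blast

end
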